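(* Fix a point $X\in\mathbb{P}^3$ and a line $L\subseteq\mathbb{P}^3$ and let $\mathcal{C}$ be a generic arrangement of $m\ge 2$ cameras. (1) The multidegree of $\mathcal{M}_\mathcal{C}^L\subseteq(\mathbb{P}^2)^m$ is given by the single value $D(1,0,\ldots,0)=1$ (and its permutations). (2) The multidegree of $\mathcal{L}_\mathcal{C}^X\subseteq(\mathbb{P}^2)^m$ is given by the values $D(2,0,\ldots,0)=0$ and $D(1,1,0,\ldots,0)=1$ (and their permutations).
   Context: All spaces are complex projective. A camera is a full-rank $3\times4$ complex matrix $C:\mathbb{P}^3\dashrightarrow\mathbb{P}^2$ with center its kernel; a camera arrangement $\mathcal{C}=(C_1,\ldots,C_m)$ has pairwise distinct centers. For a line $L'$ spanned by $u,v$, $C\cdot L':=Cu\times Cv\in\mathbb{P}^2$. $\mathcal{M}_\mathcal{C}^L$ is the Zariski closure of the image of $L\ni Y\mapsto(C_1Y,\ldots,C_mY)$; $\mathcal{L}_\mathcal{C}^X$ is the Zariski closure of the image of $\Lambda(X)\ni L'\mapsto(C_1\cdot L',\ldots,C_m\cdot L')$, $\Lambda(X)$ being the lines through $X$. For a variety $\mathcal{X}\subseteq\mathbb{P}^{h_1}\times\cdots\times\mathbb{P}^{h_m}$, its multidegree is the function $D(d_1,\ldots,d_m)=\#\big(\mathcal{X}\cap(L^{(1)}_{d_1}\times\cdots\times L^{(m)}_{d_m})\big)$ for $d_1+\cdots+d_m=\dim\mathcal{X}$, where $L^{(i)}_{d}\subseteq\mathbb{P}^{h_i}$ is a general linear subspace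 of codimension $d$. "Generic" means outside a proper Zariski closed subset. *)

theory Defs
  imports "HOL-Analysis.Analysis"
begin

inductive_set polys :: "('a \<Rightarrow> complex) set \<Rightarrow> ('a \<Rightarrow> complex) set"
  for V :: "('a \<Rightarrow> complex) set" where
  const: "(\<lambda>_. c) \<in> polys V"
| var: "v \<in> V \<Longrightarrow> v \<in> polys V"
| add: "f \<in> polys V \<Longrightarrow> g \<in> polys V \<Longrightarrow> (\<lambda>x. f x + g x) \<in> polys V"
| mult: "f \<in> polys V \<Longrightarrow> g \<in> polys V \<Longrightarrow> (\<lambda>x. f x * g x) \<in> polys V"

type_synonym camera = "complex^4^3"

(* complex projective points are represented by nonzero vectors *)
definition pt :: "complex^'n \<Rightarrow> (complex^'n) set" where
  "pt v = range (\<lambda>c. c *s v)"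

definition cindep :: "complex^'n \<Rightarrow> complex^'n \<Rightarrow> bool" where
  "cindep u v \<longleftrightarrow> (\<forall>a b. a *s u + b *s v = 0 \<longrightarrow> a = 0 \<and> b = 0)"

definition ccross :: "complex^3 \<Rightarrow> complex^3 \<Rightarrow> complex^3" where
  "ccross a b = vector [a$2 * b$3 - a$3 * b$2, a$3 * b$1 - a$1 * b$3, a$1 * b$2 - a$2 * b$1]"

(* full rank 3x4 matrix = surjective linear map C^4 -> C^3 *)
definition is_camera :: "camera \<Rightarrow> bool" where
  "is_camera C \<longleftrightarrow> (\<forall>y. \<exists>Y. C *v Y = y)"

definition center :: "camera \<Rightarrow> (complex^4) set" where
  "center C = {Y. C *v Y = 0}"

definition camera_arrangement :: "nat \<Rightarrow> (nat \<Rightarrow> camera) \<Rightarrow> bool" where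
  "camera_arrangement m Cs \<longleftrightarrow> (\<forall>i<m. is_camera (Cs i)) \<and>
     (\<forall>i<m. \<forall>j<m. i \<noteq> j \<longrightarrow> center (Cs i) \<noteq> center (Cs j))"

definition cam_coords :: "nat \<Rightarrow> ((nat \<Rightarrow> camera) \<Rightarrow> complex) set" where
  "cam_coords m = {(\<lambda>Cs. Cs i $ r $ c) | i r c. i < m}"

definition pt_coords :: "nat \<Rightarrow> ((nat \<Rightarrow> complex^3) \<Rightarrow> complex) set" where
  "pt_coords m = {(\<lambda>x. x i $ j) | i j. i < m}"

definition multihom :: "nat \<Rightarrow> (nat \<Rightarrow> nat) \<Rightarrow> ((nat \<Rightarrow> complex^3) \<Rightarrow> complex) \<Rightarrow> bool" where
  "multihom m e f \<longleftrightarrow> f \<in> polys (pt_coords m) \<and>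
     (\<forall>x l. (\<forall>i<m. l i \<noteq> 0) \<longrightarrow> f (\<lambda>i. l i *s x i) = (\<Prod>i<m. l i ^ e i) * f x)"

(* points of (P^2)^m: tuples of nonzero representatives, padded with 0 beyond m *)
definition pts_m :: "nat \<Rightarrow> (nat \<Rightarrow> complex^3) set" where
  "pts_m m = {x. (\<forall>i<m. x i \<noteq> 0) \<and> (\<forall>i\<ge>m. x i = 0)}"

definition zclosure :: "nat \<Rightarrow> (nat \<Rightarrow> complex^3) set \<Rightarrow> (nat \<Rightarrow> complex^3) set" where
  "zclosure m S = {x \<in> pts_m m. \<forall>f e. multihom m e f \<and> (\<forall>y\<in>S. f y = 0) \<longrightarrow> f x = 0}"

definition multiview_line :: "nat \<Rightarrow> (nat \<Rightarrow> camera) \<Rightarrow> complex^4 \<Rightarrow> complex^4 \<Rightarrow> (nat \<Rightarrow> complex^3) set" where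
  "multiview_line m Cs u v = zclosure m
     {x. \<exists>a b. a *s u + b *s v \<noteq> 0 \<and> (\<forall>i<m. Cs i *v (a *s u + b *s v) \<noteq> 0) \<and>
          x = (\<lambda>i. if i < m then Cs i *v (a *s u + b *s v) else 0)}"

definition cam_line :: "camera \<Rightarrow> complex^4 \<Rightarrow> complex^4 \<Rightarrow> complex^3" where
  "cam_line C u v = ccross (C *v u) (C *v v)"

(* L_C^X: lines through X are spanned by X and some w independent of X *)
definition LX_X :: "nat \<Rightarrow> (nat \<Rightarrow> camera) \<Rightarrow> complex^4 \<Rightarrow> (nat \<Rightarrow> complex^3) set" where
  "LX_X m Cs X = zclosure m
     {x. \<exists>w. cindep X w \<and> (\<forall>i<m. cam_line (Cs i) X w \<noteq> 0) \<and>
          x = (\<lambda>i. if i < m then cam_line (Cs i) X w else 0)}"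

(* a linear subspace of codim d i in the i-th P^2 is cut out by d i linear forms A i r, r < d i *)
definition lin_coords :: "nat \<Rightarrow> (nat \<Rightarrow> nat) \<Rightarrow> ((nat \<Rightarrow> nat \<Rightarrow> complex^3) \<Rightarrow> complex) set" where
  "lin_coords m d = {(\<lambda>A. A i r $ j) | i r j. i < m \<and> r < d i}"

definition section_pts :: "nat \<Rightarrow> (nat \<Rightarrow> nat) \<Rightarrow> (nat \<Rightarrow> nat \<Rightarrow> complex^3)
     \<Rightarrow> (nat \<Rightarrow> complex^3) set \<Rightarrow> (nat \<Rightarrow> (complex^3) set) set" where
  "section_pts m d A V = (\<lambda>x. \<lambda>i. pt (x i)) `
     {x \<in> V. \<forall>i<m. \<forall>r<d i. (\<Sum>j\<in>UNIV. A i r $ j * x i $ j) = 0}"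

(* multidegree value: D(d) = n, i.e. for a general choice of linear subspaces
   (outside a proper Zariski closed set, i.e. where some nonzero polynomial does not vanish)
   the intersection consists of exactly n points of (P^2)^m *)
definition multideg_is :: "nat \<Rightarrow> (nat \<Rightarrow> complex^3) set \<Rightarrow> (nat \<Rightarrow> nat) \<Rightarrow> nat \<Rightarrow> bool" where
  "multideg_is m V d n \<longleftrightarrow> (\<exists>q \<in> polys (lin_coords m d). (\<exists>A. q A \<noteq> 0) \<and>
     (\<forall>A. q A \<noteq> 0 \<longrightarrow> finite (section_pts m d A V) \<and> card (section_pts m d A V) = n))"

end

theory Submission
  imports Defs "HOL-Computational_Algebra.Polynomial"
begin


section \<open>Polynomial functions\<close>

lemma polys_minus: "f \<in> polys V \<Longrightarrow> g \<in> polys V \<Longrightarrow> (\<lambda>x. f x - g x) \<in> polys V"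
proof -
  assume f: "f \<in> polys V" and g: "g \<in> polys V"
  have "(\<lambda>x. (-1) * g x) \<in> polys V" by (rule polys.mult[OF polys.const g])
  from polys.add[OF f this] show ?thesis by simp
qed

lemma polys_sum: "finite K \<Longrightarrow> (\<And>k. k \<in> K \<Longrightarrow> F k \<in> polys V) \<Longrightarrow> (\<lambda>x. \<Sum>k\<in>K. F k x) \<in> polys V"
proof (induction K rule: finite_induct)
  case empty then show ?case using polys.const[of 0] by simp
next
  case (insert a K) then show ?case using polys.add[of "F a" V "\<lambda>x. \<Sum>k\<in>K. F k x"] by simp
qed

lemma polys_prod: "finite K \<Longrightarrow> (\<And>k. k \<in> K \<Longrightarrow> F k \<in> polys V) \<Longrightarrow> (\<lambda>x. \<Prod>k\<in>K. F k x) \<in> polys V"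
proof (induction K rule: finite_induct)
  case empty then show ?case using polys.const[of 1] by simp
next
  case (insert a K) then show ?case using polys.mult[of "F a" V "\<lambda>x. \<Prod>k\<in>K. F k x"] by simp
qed

lemma polys_poly:
  assumes "f \<in> polys V" and lin: "\<forall>v\<in>V. \<exists>c0 c1. \<forall>t. v (l t) = c0 + c1 * t"
  shows "\<exists>P. \<forall>t. f (l t) = poly P t"
  using assms(1)
proof (induction rule: polys.induct)
  case (const c) then show ?case by (rule exI[of _ "[:c:]"]) simp
next
  case (var v)
  then obtain c0 c1 where "\<forall>t. v (l t) = c0 + c1 * t" using lin by blast
  then show ?case by (intro exI[of _ "[:c0, c1:]"]) (simp add: mult.commute)
next
  case (add f g)
  then obtain P Q where "\<forall>t. f (l t) = poly P t" "\<forall>t. g (l t) = poly Q t" by blast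
  then show ?case by (intro exI[of _ "P + Q"]) simp
next
  case (mult f g)
  then obtain P Q where "\<forall>t. f (l t) = poly P t" "\<forall>t. g (l t) = poly Q t" by blast
  then show ?case by (intro exI[of _ "P * Q"]) simp
qed

lemma affine_ex[simp]: "\<exists>c0 c1. \<forall>t. (a::complex) + t * (b - a) = c0 + c1 * t"
  by (intro exI[of _ a] exI[of _ "b - a"]) (simp add: mult.commute)

definition line_ok :: "('a \<Rightarrow> complex) set \<Rightarrow> bool" where
  "line_ok V \<longleftrightarrow> (\<forall>a b. \<exists>l. l 0 = a \<and> l 1 = b \<and> (\<forall>v\<in>V. \<exists>c0 c1. \<forall>t. v (l t) = c0 + c1 * t))"

lemma polys_mult_ex:
  assumes "line_ok V" "f \<in> polys V" "g \<in> polys V" "f a \<noteq> 0" "g b \<noteq> 0"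
  shows "\<exists>x. f x * g x \<noteq> 0"
proof -
  obtain l where l: "l 0 = a" "l 1 = b" "\<forall>v\<in>V. \<exists>c0 c1. \<forall>t. v (l t) = c0 + c1 * t"
    using assms(1) unfolding line_ok_def by blast
  obtain P where P: "\<forall>t. f (l t) = poly P t" using polys_poly[OF assms(2) l(3)] by blast
  obtain Q where Q: "\<forall>t. g (l t) = poly Q t" using polys_poly[OF assms(3) l(3)] by blast
  have "P \<noteq> 0" using P[rule_format, of 0] l assms(4) by auto
  moreover have "Q \<noteq> 0" using Q[rule_format, of 1] l assms(5) by auto
  ultimately have "P * Q \<noteq> 0" by simp
  then have "finite {t. poly (P * Q) t = 0}" by (rule poly_roots_finite)
  moreover have "infinite (UNIV :: complex set)" by (rule infinite_UNIV_char_0)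
  ultimately obtain t where "poly (P * Q) t \<noteq> 0"
    by (metis (mono_tags, lifting) UNIV_I finite_subset mem_Collect_eq subsetI)
  then show ?thesis using P Q by (intro exI[of _ "l t"]) simp
qed

lemma polys_prod_ex:
  assumes "line_ok V" "finite K" "\<And>k. k \<in> K \<Longrightarrow> F k \<in> polys V \<and> (\<exists>x. F k x \<noteq> 0)"
  shows "(\<lambda>x. \<Prod>k\<in>K. F k x) \<in> polys V \<and> (\<exists>x. (\<Prod>k\<in>K. F k x) \<noteq> 0)"
  using assms(2,3)
proof (induction K rule: finite_induct)
  case empty then show ?case using polys.const[of 1] by simp
next
  case (insert a K)
  then have h1: "(\<lambda>x. \<Prod>k\<in>K. F k x) \<in> polys V" "\<exists>x. (\<Prod>k\<in>K. F k x) \<noteq> 0"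
      and h2: "F a \<in> polys V" "\<exists>x. F a x \<noteq> 0" by auto
  obtain x1 where "F a x1 \<noteq> 0" using h2 by blast
  obtain x2 where "(\<Prod>k\<in>K. F k x2) \<noteq> 0" using h1 by blast
  obtain x where "F a x * (\<Prod>k\<in>K. F k x) \<noteq> 0"
    using polys_mult_ex[OF assms(1) h2(1) h1(1) \<open>F a x1 \<noteq> 0\<close> \<open>(\<Prod>k\<in>K. F k x2) \<noteq> 0\<close>] by blast
  then show ?case using insert polys.mult[OF h2(1) h1(1)] by auto
qed

lemma line_ok_cam: "line_ok (cam_coords m)"
  unfolding line_ok_def
proof (intro allI)
  fix a b :: "nat \<Rightarrow> camera"
  let ?l = "\<lambda>t::complex. \<lambda>k. (\<chi> r c. a k $ r $ c + t * (b k $ r $ c - a k $ r $ c)) :: camera"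
  show "\<exists>l. l 0 = a \<and> l 1 = b \<and> (\<forall>v\<in>cam_coords m. \<exists>c0 c1. \<forall>t. v (l t) = c0 + c1 * t)"
    by (rule exI[of _ ?l]) (auto simp: vec_eq_iff cam_coords_def)
qed

lemma line_ok_lin: "line_ok (lin_coords m d)"
  unfolding line_ok_def
proof (intro allI)
  fix a b :: "nat \<Rightarrow> nat \<Rightarrow> complex^3"
  let ?l = "\<lambda>t::complex. \<lambda>k r. (\<chi> c. a k r $ c + t * (b k r $ c - a k r $ c))"
  show "\<exists>l. l 0 = a \<and> l 1 = b \<and> (\<forall>v\<in>lin_coords m d. \<exists>c0 c1. \<forall>t. v (l t) = c0 + c1 * t)"
    by (rule exI[of _ ?l]) (auto simp: vec_eq_iff lin_coords_def)
qed

definition wcoords :: "(complex^4 \<Rightarrow> complex) set" where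
  "wcoords = range (\<lambda>s w. w $ s)"

lemma line_ok_w: "line_ok wcoords"
  unfolding line_ok_def
proof (intro allI)
  fix a b :: "complex^4"
  let ?l = "\<lambda>t::complex. (\<chi> c. a $ c + t * (b $ c - a $ c))"
  show "\<exists>l. l 0 = a \<and> l 1 = b \<and> (\<forall>v\<in>wcoords. \<exists>c0 c1. \<forall>t. v (l t) = c0 + c1 * t)"
    by (rule exI[of _ ?l]) (auto simp: vec_eq_iff wcoords_def)
qed



definition dot :: "complex^'n \<Rightarrow> complex^'n \<Rightarrow> complex" where
 "dot a b = (\<Sum>j\<in>UNIV. a$j * b$j)"

definition v4 :: "complex \<Rightarrow> complex \<Rightarrow> complex \<Rightarrow> complex \<Rightarrow> complex^4" where
 "v4 a b c d = (\<chi> r. if r = 1 then a else if r = 2 then b else if r = 3 then c else d)"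
lemma v4_nth[simp]: "v4 a b c d $ 1 = a" "v4 a b c d $ 2 = b" "v4 a b c d $ 3 = c" "v4 a b c d $ 4 = d"
  by (simp_all add: v4_def)

definition det3 :: "complex \<Rightarrow> complex \<Rightarrow> complex \<Rightarrow> complex \<Rightarrow> complex \<Rightarrow> complex \<Rightarrow> complex \<Rightarrow> complex \<Rightarrow> complex \<Rightarrow> complex" where
 "det3 a1 a2 a3 b1 b2 b3 c1 c2 c3 = a1*(b2*c3 - b3*c2) - a2*(b1*c3 - b3*c1) + a3*(b1*c2 - b2*c1)"

definition cross4 :: "complex^4 \<Rightarrow> complex^4 \<Rightarrow> complex^4 \<Rightarrow> complex^4" where
 "cross4 a b c = v4
   (- det3 (a$2) (a$3) (a$4) (b$2) (b$3) (b$4) (c$2) (c$3) (c$4))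
   (det3 (a$1) (a$3) (a$4) (b$1) (b$3) (b$4) (c$1) (c$3) (c$4))
   (- det3 (a$1) (a$2) (a$4) (b$1) (b$2) (b$4) (c$1) (c$2) (c$4))
   (det3 (a$1) (a$2) (a$3) (b$1) (b$2) (b$3) (c$1) (c$2) (c$3))"

lemma dot4: "dot (a::complex^4) b = a$1*b$1 + a$2*b$2 + a$3*b$3 + a$4*b$4"
  by (simp add: dot_def sum_4)
lemma dot3: "dot (a::complex^3) b = a$1*b$1 + a$2*b$2 + a$3*b$3"
  by (simp add: dot_def sum_3)

lemma cross4_orth: "dot a (cross4 a b c) = 0" "dot b (cross4 a b c) = 0" "dot c (cross4 a b c) = 0"
  by (simp_all add: dot4 cross4_def det3_def algebra_simps)

lemma cramer4: "dot z (cross4 a b c) *s n = (- dot a n) *s cross4 b c z + dot b n *s cross4 a c z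
   - dot c n *s cross4 a b z + dot z n *s cross4 a b c"
  unfolding vec_eq_iff forall_4
  by (simp add: dot4 cross4_def det3_def algebra_simps)

lemma cramer4_zero:
  assumes "dot a n = 0" "dot b n = 0" "dot c n = 0" "dot z n = 0" "n \<noteq> 0"
  shows "dot z (cross4 a b c) = 0"
  using cramer4[of z a b c n] assms by simp

lemma cramer4_inj:
  assumes "dot a n = 0" "dot b n = 0" "dot c n = 0" "dot z n = 0" "dot z (cross4 a b c) \<noteq> 0"
  shows "n = 0"
  using cramer4[of z a b c n] assms by simp

lemma cross4_scale:
  "cross4 (s *s a) b c = s *s cross4 a b c"
  "cross4 a (s *s b) c = s *s cross4 a b c"
  "cross4 a b (s *s c) = s *s cross4 a b c"
  unfolding vec_eq_iff forall_4 by (simp_all add: cross4_def det3_def algebra_simps)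

lemma dot_comm: "dot a b = dot b a"
  by (simp add: dot_def mult.commute)
lemma dot_scale[simp]: "dot (s *s a) b = s * dot a b" "dot a (s *s b) = s * dot a b"
  by (simp_all add: dot_def sum_distrib_left algebra_simps)
lemma dot_add[simp]: "dot (a + b) c = dot a c + dot b c" "dot c (a + b) = dot c a + dot c b"
  by (simp_all add: dot_def sum.distrib algebra_simps)
lemma dot_diff[simp]: "dot (a - b) c = dot a c - dot b c" "dot c (a - b) = dot c a - dot c b"
  by (simp_all add: dot_def sum_subtractf algebra_simps)
lemma dot_zero[simp]: "dot 0 a = 0" "dot a 0 = 0"
  by (simp_all add: dot_def)

lemma dot_vm: "dot (t v* C) Y = dot t (C *v Y)"
proof -
  have "dot (t v* C) Y = (\<Sum>s\<in>UNIV. \<Sum>r\<in>UNIV. t$r * (C$r$s * Y$s))"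
    by (simp add: dot_def vector_matrix_mult_def sum_distrib_right mult.assoc)
  also have "\<dots> = (\<Sum>r\<in>UNIV. \<Sum>s\<in>UNIV. t$r * (C$r$s * Y$s))" by (rule sum.swap)
  also have "\<dots> = dot t (C *v Y)" by (simp add: dot_def matrix_vector_mult_def sum_distrib_left)
  finally show ?thesis .
qed

lemma vm_scale: "(s *s t) v* (C::complex^'n^'m) = s *s (t v* C)"
  by (simp add: vec_eq_iff vector_matrix_mult_def sum_distrib_left algebra_simps)

lemma mv_scale: "(C::complex^'n^'m) *v (s *s t) = s *s (C *v t)"
  unfolding vec_eq_iff matrix_vector_mult_def by (auto simp: sum_distrib_left mult.left_commute intro!: sum.cong)

lemma ccross_nth[simp]:
  "ccross a b $ 1 = a$2 * b$3 - a$3 * b$2"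
  "ccross a b $ 2 = a$3 * b$1 - a$1 * b$3"
  "ccross a b $ 3 = a$1 * b$2 - a$2 * b$1"
  by (simp_all add: ccross_def)

lemma ccross_orth[simp]: "dot a (ccross a b) = 0" "dot b (ccross a b) = 0"
  "dot (ccross a b) a = 0" "dot (ccross a b) b = 0"
  by (simp_all add: dot3 algebra_simps)

lemma triple: "dot a (ccross b c) = dot (ccross a b) c"
  by (simp add: dot3 algebra_simps)

lemma ccross_scale[simp]: "ccross (s *s a) b = s *s ccross a b" "ccross a (s *s b) = s *s ccross a b"
  unfolding vec_eq_iff forall_3 by (simp_all add: algebra_simps)

lemma ccross_add: "ccross (a + b) c = ccross a c + ccross b c" "ccross c (a + b) = ccross c a + ccross c b"
  unfolding vec_eq_iff forall_3 by (simp_all add: algebra_simps)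

lemma ccross_diff: "ccross (a - b) c = ccross a c - ccross b c" "ccross c (a - b) = ccross c a - ccross c b"
  unfolding vec_eq_iff forall_3 by (simp_all add: algebra_simps)

lemma ccross_self[simp]: "ccross a a = 0"
  unfolding vec_eq_iff forall_3 by (simp add: algebra_simps)

lemma ccross_zero[simp]: "ccross 0 a = 0" "ccross a 0 = 0"
  unfolding vec_eq_iff forall_3 by simp_all

lemma ccross_anti: "ccross b a = - ccross a b"
  unfolding vec_eq_iff forall_3 by (simp add: algebra_simps)

lemma bac_cab: "ccross a (ccross b c) = dot a c *s b - dot a b *s c"
  unfolding vec_eq_iff forall_3 by (simp add: dot3 algebra_simps)

lemma cab_bac: "ccross (ccross a b) c = dot a c *s b - dot b c *s a"
  unfolding vec_eq_iff forall_3 by (simp add: dot3 algebra_simps)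

lemma cross_par:
  assumes "ccross x (y::complex^3) = 0" "y \<noteq> 0"
  shows "\<exists>s. x = s *s y"
proof -
  from assms(2) obtain r where r: "y $ r \<noteq> 0" by (auto simp: vec_eq_iff)
  have c: "x$2 * y$3 = x$3 * y$2" "x$3 * y$1 = x$1 * y$3" "x$1 * y$2 = x$2 * y$1"
    using assms(1) unfolding vec_eq_iff forall_3 by (simp_all add: algebra_simps)
  consider "r = 1" | "r = 2" | "r = 3" using exhaust_3 by blast
  then show ?thesis
  proof cases
    case 1
    have "x = (x$1 / y$1) *s y" unfolding vec_eq_iff forall_3 using r c 1
      by (simp add: field_simps; metis mult.commute)
    then show ?thesis by blast
  next
    case 2
    have "x = (x$2 / y$2) *s y" unfolding vec_eq_iff forall_3 using r c 2
      by (simp add: field_simps; metis mult.commute)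
    then show ?thesis by blast
  next
    case 3
    have "x = (x$3 / y$3) *s y" unfolding vec_eq_iff forall_3 using r c 3
      by (simp add: field_simps; metis mult.commute)
    then show ?thesis by blast
  qed
qed

lemma perp2:
  assumes "dot x p = 0" "dot x q = 0" "ccross p q \<noteq> 0"
  shows "\<exists>s. x = s *s ccross p q"
proof -
  have "ccross x (ccross p q) = 0" using assms by (simp add: bac_cab)
  then show ?thesis using cross_par assms(3) by blast
qed

lemma cramer3:
  assumes "dot a x = 0" "dot b x = 0" "dot c x = 0" "dot c (ccross a b) \<noteq> 0"
  shows "(x::complex^3) = 0"
proof -
  have "dot c (ccross a b) *s x = dot a x *s ccross b c + dot b x *s ccross c a + dot c x *s ccross a b"
    unfolding vec_eq_iff forall_3 by (simp add: dot3 algebra_simps)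
  also have "\<dots> = 0" using assms(1-3) by simp
  finally show ?thesis using assms(4) by simp
qed

lemma cross_ne:
  assumes "(v::complex^3) \<noteq> 0" shows "\<exists>a. ccross a v \<noteq> 0"
proof -
  from assms obtain r where r: "v $ r \<noteq> 0" by (auto simp: vec_eq_iff)
  consider "r = 1" | "r = 2" | "r = 3" using exhaust_3 by blast
  then show ?thesis
  proof cases
    case 1
    have "ccross (axis 2 1) v $ 3 \<noteq> 0" using r 1 by (simp add: axis_def)
    then show ?thesis by (metis zero_index)
  next
    case 2
    have "ccross (axis 3 1) v $ 1 \<noteq> 0" using r 2 by (simp add: axis_def)
    then show ?thesis by (metis zero_index)
  next
    case 3
    have "ccross (axis 1 1) v $ 2 \<noteq> 0" using r 3 by (simp add: axis_def)
    then show ?thesis by (metis zero_index)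
  qed
qed

definition cvec :: "complex^'n \<Rightarrow> complex^'n" where
  "cvec w = (\<chi> r. cnj (w $ r))"

lemma dot_cvec: assumes "w \<noteq> 0" shows "dot (cvec w) w \<noteq> 0"
proof
  assume h: "dot (cvec w) w = 0"
  have e: "cnj (w$j) * w$j = complex_of_real ((cmod (w$j))^2)" for j
    using complex_norm_square[of "w$j"] by (simp add: mult.commute)
  have "complex_of_real (\<Sum>j\<in>UNIV. (cmod (w$j))^2) = dot (cvec w) w"
    unfolding dot_def cvec_def of_real_sum by (simp add: e)
  with h have "(\<Sum>j\<in>UNIV. (cmod (w$j))^2) = 0" by (metis of_real_eq_0_iff)
  then have "\<forall>j\<in>UNIV. (cmod (w$j))^2 = 0" by (subst (asm) sum_nonneg_eq_0_iff) auto
  then have "w = 0" by (simp add: vec_eq_iff)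
  with assms show False by simp
qed



definition pvec :: "('a \<Rightarrow> complex) set \<Rightarrow> ('a \<Rightarrow> complex^'n) \<Rightarrow> bool" where
  "pvec V F \<longleftrightarrow> (\<forall>r. (\<lambda>x. F x $ r) \<in> polys V)"
definition pmat :: "('a \<Rightarrow> complex) set \<Rightarrow> ('a \<Rightarrow> complex^'n^'m) \<Rightarrow> bool" where
  "pmat V M \<longleftrightarrow> (\<forall>r c. (\<lambda>x. M x $ r $ c) \<in> polys V)"

lemma polys_neg: "f \<in> polys V \<Longrightarrow> (\<lambda>x. - f x) \<in> polys V"
  using polys.mult[OF polys.const[of "-1"], of f] by simp

lemma pvec_nth: "pvec V F \<Longrightarrow> (\<lambda>x. F x $ r) \<in> polys V"
  by (simp add: pvec_def)
lemma pvec_const: "pvec V (\<lambda>x. c)"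
  by (simp add: pvec_def polys.const)
lemma pmat_const: "pmat V (\<lambda>x. c)"
  by (simp add: pmat_def polys.const)

lemma dot_polys: "pvec V F \<Longrightarrow> pvec V G \<Longrightarrow> (\<lambda>x. dot (F x) (G x)) \<in> polys V"
  unfolding dot_def by (intro polys_sum polys.mult) (auto simp: pvec_def)

lemma pvec_add: "pvec V F \<Longrightarrow> pvec V G \<Longrightarrow> pvec V (\<lambda>x. F x + G x)"
  unfolding pvec_def by (auto intro: polys.add)
lemma pvec_diff: "pvec V F \<Longrightarrow> pvec V G \<Longrightarrow> pvec V (\<lambda>x. F x - G x)"
  unfolding pvec_def by (auto intro: polys_minus)
lemma pvec_scale: "f \<in> polys V \<Longrightarrow> pvec V G \<Longrightarrow> pvec V (\<lambda>x. f x *s G x)"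
  unfolding pvec_def by (auto intro: polys.mult)

lemma pvec_mv: "pmat V M \<Longrightarrow> pvec V F \<Longrightarrow> pvec V (\<lambda>x. M x *v F x)"
  unfolding pvec_def pmat_def matrix_vector_mult_def by (auto intro!: polys_sum polys.mult)
lemma pvec_vm: "pvec V F \<Longrightarrow> pmat V M \<Longrightarrow> pvec V (\<lambda>x. F x v* M x)"
  unfolding pvec_def pmat_def vector_matrix_mult_def by (auto intro!: polys_sum polys.mult)

lemma pvec_ccross:
  assumes "pvec V F" "pvec V G" shows "pvec V (\<lambda>x. ccross (F x) (G x))"
  unfolding pvec_def
proof
  fix r :: 3
  have h: "(\<lambda>x. F x $ s) \<in> polys V" "(\<lambda>x. G x $ s) \<in> polys V" for s
    using assms by (auto simp: pvec_def)
  consider "r = 1" | "r = 2" | "r = 3" using exhaust_3 by blast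
  then show "(\<lambda>x. ccross (F x) (G x) $ r) \<in> polys V"
    by cases (simp_all add: h polys_minus polys.mult)
qed

lemma det3_polys:
  assumes "a1 \<in> polys V" "a2 \<in> polys V" "a3 \<in> polys V" "b1 \<in> polys V" "b2 \<in> polys V" "b3 \<in> polys V"
    "c1 \<in> polys V" "c2 \<in> polys V" "c3 \<in> polys V"
  shows "(\<lambda>x. det3 (a1 x) (a2 x) (a3 x) (b1 x) (b2 x) (b3 x) (c1 x) (c2 x) (c3 x)) \<in> polys V"
  unfolding det3_def by (intro polys_minus polys.add polys.mult assms)

lemma pvec_cross4:
  assumes "pvec V F" "pvec V G" "pvec V H" shows "pvec V (\<lambda>x. cross4 (F x) (G x) (H x))"
  unfolding pvec_def
proof
  fix r :: 4
  have h: "(\<lambda>x. F x $ s) \<in> polys V" "(\<lambda>x. G x $ s) \<in> polys V" "(\<lambda>x. H x $ s) \<in> polys V" for s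
    using assms by (auto simp: pvec_def)
  consider "r = 1" | "r = 2" | "r = 3" | "r = 4" using exhaust_4 by blast
  then show "(\<lambda>x. cross4 (F x) (G x) (H x) $ r) \<in> polys V"
    by cases (simp_all add: cross4_def h det3_polys polys_neg)
qed

lemma cam_pmat: "k < m \<Longrightarrow> pmat (cam_coords m) (\<lambda>Cs. Cs k)"
  unfolding pmat_def cam_coords_def by (auto intro!: polys.var)
lemma pts_pvec: "k < m \<Longrightarrow> pvec (pt_coords m) (\<lambda>x. x k)"
  unfolding pvec_def pt_coords_def by (auto intro!: polys.var)
lemma lin_pvec: "i < m \<Longrightarrow> r < d i \<Longrightarrow> pvec (lin_coords m d) (\<lambda>A. A i r)"
  unfolding pvec_def lin_coords_def by (auto intro!: polys.var)
lemma w_pvec: "pvec wcoords (\<lambda>w. w)"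
  unfolding pvec_def wcoords_def by (auto intro!: polys.var)

lemma zcl_sub: "S \<subseteq> pts_m m \<Longrightarrow> y \<in> S \<Longrightarrow> y \<in> zclosure m S"
  unfolding zclosure_def by auto
lemma zcl_ev: "x \<in> zclosure m S \<Longrightarrow> multihom m e f \<Longrightarrow> (\<And>y. y \<in> S \<Longrightarrow> f y = 0) \<Longrightarrow> f x = 0"
  unfolding zclosure_def by auto
lemma zcl_pts: "x \<in> zclosure m S \<Longrightarrow> x \<in> pts_m m"
  unfolding zclosure_def by auto

definition ind :: "nat \<Rightarrow> nat \<Rightarrow> nat" where "ind i l = (if l = i then 1 else 0)"

lemma prod_ind: "i < m \<Longrightarrow> (\<Prod>l<m. (c l :: complex) ^ ind i l) = c i"
proof -
  assume i: "i < m"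
  have "(\<Prod>l<m. c l ^ ind i l) = (\<Prod>l<m. if l = i then c l else 1)"
    by (rule prod.cong) (auto simp: ind_def)
  also have "\<dots> = c i" using i by (simp add: prod.delta)
  finally show ?thesis .
qed

lemma prod_ind2: "i < m \<Longrightarrow> k < m \<Longrightarrow> (\<Prod>l<m. (c l :: complex) ^ (ind i l + ind k l)) = c i * c k"
  by (simp add: power_add prod.distrib prod_ind)

lemma prod_ind3: "i < m \<Longrightarrow> j < m \<Longrightarrow> k < m \<Longrightarrow>
   (\<Prod>l<m. (c l :: complex) ^ (ind i l + ind j l + ind k l)) = c i * c j * c k"
  by (simp add: power_add prod.distrib prod_ind)

lemma pt_scale: "c \<noteq> 0 \<Longrightarrow> pt (c *s v) = pt v"
  unfolding pt_def
proof (intro set_eqI iffI)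
  fix x assume "c \<noteq> 0" "x \<in> range (\<lambda>c'. c' *s (c *s v))"
  then show "x \<in> range (\<lambda>c. c *s v)" by (auto simp: vector_smult_assoc)
next
  fix x assume c: "c \<noteq> 0" and "x \<in> range (\<lambda>c. c *s v)"
  then obtain c' where "x = c' *s v" by auto
  then have "x = (c' / c) *s (c *s v)" using c by (simp add: vector_smult_assoc)
  then show "x \<in> range (\<lambda>c'. c' *s (c *s v))" by (rule range_eqI)
qed

lemma section_single:
  assumes Vp: "V \<subseteq> pts_m m" and y: "y \<in> V" "P y"
    and uniq: "\<And>x. x \<in> V \<Longrightarrow> P x \<Longrightarrow> \<forall>k<m. \<exists>c. x k = c *s y k"
  shows "finite ((\<lambda>x. \<lambda>i. pt (x i)) ` {x \<in> V. P x}) \<and> card ((\<lambda>x. \<lambda>i. pt (x i)) ` {x \<in> V. P x}) = 1"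
proof -
  have "(\<lambda>x. \<lambda>i. pt (x i)) ` {x \<in> V. P x} = {\<lambda>i. pt (y i)}"
  proof (intro set_eqI iffI)
    fix z assume "z \<in> (\<lambda>x. \<lambda>i. pt (x i)) ` {x \<in> V. P x}"
    then obtain x where x: "x \<in> V" "P x" "z = (\<lambda>i. pt (x i))" by auto
    have xp: "x \<in> pts_m m" "y \<in> pts_m m" using x y Vp by auto
    have "pt (x k) = pt (y k)" for k
    proof (cases "k < m")
      case True
      then obtain c where c: "x k = c *s y k" using uniq[OF x(1,2)] by blast
      have "c \<noteq> 0" using xp True c unfolding pts_m_def by auto
      then show ?thesis using c pt_scale by simp
    next
      case False then show ?thesis using xp unfolding pts_m_def by auto
    qed
    then show "z \<in> {\<lambda>i. pt (y i)}" using x by auto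
  next
    fix z assume "z \<in> {\<lambda>i. pt (y i)}"
    then show "z \<in> (\<lambda>x. \<lambda>i. pt (x i)) ` {x \<in> V. P x}" using y by auto
  qed
  then show ?thesis by simp
qed

lemma cond1: "i < m \<Longrightarrow> (\<forall>i'<m. \<forall>r<(if i' = i then 1 else 0::nat). (\<Sum>j\<in>UNIV. A i' r $ j * x i' $ j) = 0)
   \<longleftrightarrow> dot (A i 0) (x i) = 0"
  by (auto simp: dot_def)

lemma cond2: "i < m \<Longrightarrow> (\<forall>i'<m. \<forall>r<(if i' = i then 2 else 0::nat). (\<Sum>j\<in>UNIV. A i' r $ j * x i' $ j) = 0)
   \<longleftrightarrow> dot (A i 0) (x i) = 0 \<and> dot (A i 1) (x i) = 0"
  by (auto simp: dot_def less_2_cases_iff)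

lemma cond11: "i < m \<Longrightarrow> j < m \<Longrightarrow> (\<forall>i'<m. \<forall>r<(if i' = i \<or> i' = j then 1 else 0::nat). (\<Sum>j\<in>UNIV. A i' r $ j * x i' $ j) = 0)
   \<longleftrightarrow> dot (A i 0) (x i) = 0 \<and> dot (A j 0) (x j) = 0"
  by (auto simp: dot_def)



lemma mh_lin: "i < m \<Longrightarrow> multihom m (ind i) (\<lambda>x. dot (x i) n)"
  unfolding multihom_def
  by (auto intro!: dot_polys pts_pvec pvec_const simp: prod_ind)

lemma part1:
  fixes C :: "nat \<Rightarrow> camera"
  assumes i: "i < m" and nk: "\<forall>k<m. ccross (C k *v u) (C k *v v) \<noteq> 0"
  shows "multideg_is m (multiview_line m C u v) (\<lambda>k. if k = i then 1 else 0) 1"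
proof -
  define p1 where "p1 = C i *v u"
  define p2 where "p2 = C i *v v"
  define n where "n = ccross p1 p2"
  have n0: "n \<noteq> 0" using nk i by (simp add: n_def p1_def p2_def)
  then obtain r where nr: "n $ r \<noteq> 0" by (auto simp: vec_eq_iff)
  obtain a0 where a0: "ccross a0 n \<noteq> 0" using cross_ne[OF n0] by blast
  then obtain s where s: "ccross a0 n $ s \<noteq> 0" by (auto simp: vec_eq_iff)
  define d where "d = (\<lambda>k. if k = i then 1 else 0::nat)"
  define q where "q = (\<lambda>A::nat \<Rightarrow> nat \<Rightarrow> complex^3. ccross (A i 0) n $ s)"
  have qp: "q \<in> polys (lin_coords m d)"
    unfolding q_def by (intro pvec_nth pvec_ccross lin_pvec pvec_const) (use i in \<open>auto simp: d_def\<close>)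
  have qn: "\<exists>A. q A \<noteq> 0" using s by (intro exI[of _ "\<lambda>_ _. a0"]) (simp add: q_def)
  define S where "S = {x. \<exists>a b. a *s u + b *s v \<noteq> 0 \<and> (\<forall>i<m. C i *v (a *s u + b *s v) \<noteq> 0) \<and>
          x = (\<lambda>i. if i < m then C i *v (a *s u + b *s v) else 0)}"
  have V: "multiview_line m C u v = zclosure m S" by (simp add: multiview_line_def S_def)
  have Sp: "S \<subseteq> pts_m m" unfolding S_def pts_m_def by auto
  define Yf where "Yf = (\<lambda>w. (ccross w p2) $ r *s u + (ccross p1 w) $ r *s v)"
  have Yf_lin: "Yf (\<alpha> *s p1 + \<beta> *s p2) = n $ r *s (\<alpha> *s u + \<beta> *s v)" for \<alpha> \<beta>
  proof -
    have "ccross (\<alpha> *s p1 + \<beta> *s p2) p2 = \<alpha> *s n" "ccross p1 (\<alpha> *s p1 + \<beta> *s p2) = \<beta> *s n"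
      by (simp_all add: ccross_add n_def)
    then show ?thesis by (simp add: Yf_def vector_add_ldistrib vector_smult_assoc mult.commute)
  qed
  have Yf_scale: "Yf (c *s w) = c *s Yf w" for c w
    by (simp add: Yf_def vector_add_ldistrib vector_smult_assoc)
  have g_van: "dot (x i) n = 0" if "x \<in> zclosure m S" for x
  proof (rule zcl_ev[OF that mh_lin[OF i]])
    fix y assume "y \<in> S"
    then obtain a b where "y = (\<lambda>i. if i < m then C i *v (a *s u + b *s v) else 0)" unfolding S_def by auto
    then have "y i = a *s p1 + b *s p2" using i by (simp add: p1_def p2_def matrix_vector_right_distrib matrix_vector_mult_diff_distrib mv_scale)
    then show "dot (y i) n = 0" by (simp add: n_def)
  qed
  have f_van: "ccross (x k) (C k *v Yf (x i)) = 0" if "x \<in> zclosure m S" "k < m" for x k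
  proof -
    have "ccross (x k) (C k *v Yf (x i)) $ t = 0" for t
    proof (rule zcl_ev[OF that(1), of "\<lambda>l. ind i l + ind k l"])
      show "multihom m (\<lambda>l. ind i l + ind k l) (\<lambda>x. ccross (x k) (C k *v Yf (x i)) $ t)"
        unfolding multihom_def
      proof (intro conjI allI impI)
        show "(\<lambda>x. ccross (x k) (C k *v Yf (x i)) $ t) \<in> polys (pt_coords m)"
          unfolding Yf_def
          by (intro pvec_nth pvec_ccross pts_pvec pvec_mv pmat_const pvec_add pvec_scale pvec_const
              that i)
      next
        fix x :: "nat \<Rightarrow> complex^3" and l :: "nat \<Rightarrow> complex"
        show "ccross (l k *s x k) (C k *v Yf (l i *s x i)) $ t =
            (\<Prod>j<m. l j ^ (ind i j + ind k j)) * ccross (x k) (C k *v Yf (x i)) $ t"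
          using prod_ind2[OF i that(2), of l] by (simp add: Yf_scale mv_scale)
      qed
    next
      fix y assume "y \<in> S"
      then obtain a b where y: "y = (\<lambda>i. if i < m then C i *v (a *s u + b *s v) else 0)" unfolding S_def by auto
      then have "y i = a *s p1 + b *s p2" using i by (simp add: p1_def p2_def matrix_vector_right_distrib matrix_vector_mult_diff_distrib mv_scale)
      then have "Yf (y i) = n $ r *s (a *s u + b *s v)" by (simp only: Yf_lin)
      then have "C k *v Yf (y i) = n $ r *s (C k *v (a *s u + b *s v))" by (simp only: mv_scale)
      then have "C k *v Yf (y i) = n $ r *s y k" using that(2) y by simp
      then show "ccross (y k) (C k *v Yf (y i)) $ t = 0" by simp
    qed
    then show ?thesis by (simp add: vec_eq_iff)
  qed
  have main: "finite (section_pts m d A (multiview_line m C u v)) \<and> card (section_pts m d A (multiview_line m C u v)) = 1"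
    if qA: "q A \<noteq> 0" for A
  proof -
    define a where "a = A i 0"
    have an: "ccross a n \<noteq> 0" using qA by (auto simp: q_def a_def)
    define Ya where "Ya = dot a p2 *s u + (- dot a p1) *s v"
    have can: "ccross a n = dot a p2 *s p1 + (- dot a p1) *s p2" by (simp add: n_def bac_cab)
    have CYa: "C i *v Ya = ccross a n"
      by (simp add: can Ya_def p1_def p2_def matrix_vector_right_distrib matrix_vector_mult_diff_distrib mv_scale)
    have Ck: "C k *v Ya \<noteq> 0" if k: "k < m" for k
    proof
      assume h: "C k *v Ya = 0"
      let ?u = "C k *v u" and ?v = "C k *v v"
      have nk': "ccross ?u ?v \<noteq> 0" using nk k by auto
      have e: "dot a p2 *s ?u + (- dot a p1) *s ?v = 0"
        using h by (simp add: Ya_def matrix_vector_right_distrib matrix_vector_mult_diff_distrib mv_scale)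
      have "ccross (dot a p2 *s ?u + (- dot a p1) *s ?v) ?v = dot a p2 *s ccross ?u ?v"
        by (simp add: ccross_add ccross_diff)
      then have "dot a p2 = 0" using e nk' by simp
      moreover have "ccross ?u (dot a p2 *s ?u + (- dot a p1) *s ?v) = (- dot a p1) *s ccross ?u ?v"
        by (simp add: ccross_add ccross_diff)
      then have "dot a p1 = 0" using e nk' by simp
      ultimately show False using an can by simp
    qed
    define y where "y = (\<lambda>k. if k < m then C k *v Ya else 0)"
    have yS: "y \<in> S"
    proof -
      have "Ya \<noteq> 0" using CYa an by auto
      then show ?thesis unfolding S_def y_def Ya_def using Ck
        by (intro CollectI exI[of _ "dot a p2"] exI[of _ "- dot a p1"]) (auto simp: Ya_def)
    qed
    have yV: "y \<in> zclosure m S" by (rule zcl_sub[OF Sp yS])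
    have ycond: "dot a (y i) = 0" using i by (simp add: y_def CYa)
    have uniq: "\<forall>k<m. \<exists>c. x k = c *s y k" if xV: "x \<in> zclosure m S" and xc: "dot a (x i) = 0" for x
    proof (intro allI impI)
      fix k assume k: "k < m"
      have "dot (x i) a = 0" using xc by (simp add: dot_comm)
      then obtain s0 where s0: "x i = s0 *s ccross a n" using perp2[OF _ g_van[OF xV] an] by blast
      have "x i \<noteq> 0" using zcl_pts[OF xV] i by (auto simp: pts_m_def)
      then have s00: "s0 \<noteq> 0" using s0 by auto
      have "x i = s0 *s (dot a p2 *s p1 + (- dot a p1) *s p2)" by (simp only: s0 can)
      then have "Yf (x i) = s0 *s (n$r *s Ya)" by (simp only: Yf_scale Yf_lin Ya_def)
      then have "C k *v Yf (x i) = (s0 * n $ r) *s (C k *v Ya)" by (simp add: mv_scale vector_smult_assoc)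
      then have "C k *v Yf (x i) = (s0 * n $ r) *s y k" using k by (simp add: y_def)
      then have "(s0 * n $ r) *s ccross (x k) (y k) = 0" using f_van[OF xV k] by simp
      then have "ccross (x k) (y k) = 0" using s00 nr by (simp add: vec_eq_iff)
      moreover have "y k \<noteq> 0" using Ck[OF k] k by (simp add: y_def)
      ultimately show "\<exists>c. x k = c *s y k" by (rule cross_par)
    qed
    have sp: "section_pts m d A (multiview_line m C u v) =
        (\<lambda>x. \<lambda>i. pt (x i)) ` {x \<in> zclosure m S. dot a (x i) = 0}"
      unfolding section_pts_def V d_def a_def using i by (simp add: dot_def)
    show ?thesis unfolding sp
      by (rule section_single[where y = y]) (use zcl_pts yV ycond uniq in auto)
  qed
  show ?thesis unfolding multideg_is_def d_def[symmetric]
    using qp qn main by blast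
qed



definition LXS :: "nat \<Rightarrow> (nat \<Rightarrow> camera) \<Rightarrow> complex^4 \<Rightarrow> (nat \<Rightarrow> complex^3) set" where
  "LXS m C X = {x. \<exists>w. cindep X w \<and> (\<forall>i<m. cam_line (C i) X w \<noteq> 0) \<and>
          x = (\<lambda>i. if i < m then cam_line (C i) X w else 0)}"

lemma LX_eq: "LX_X m C X = zclosure m (LXS m C X)"
  by (simp add: LX_X_def LXS_def)

lemma LXS_pts: "LXS m C X \<subseteq> pts_m m"
  unfolding LXS_def pts_m_def by auto

lemma LX_g: assumes "x \<in> LX_X m C X" "l < m" shows "dot (x l) (C l *v X) = 0"
proof (rule zcl_ev[OF assms(1)[unfolded LX_eq] mh_lin[OF assms(2)]])
  fix y assume "y \<in> LXS m C X"
  then obtain w where "y = (\<lambda>i. if i < m then cam_line (C i) X w else 0)" unfolding LXS_def by auto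
  then show "dot (y l) (C l *v X) = 0" using assms(2) by (simp add: cam_line_def)
qed

lemma part2a:
  fixes C :: "nat \<Rightarrow> camera"
  assumes i: "i < m" and P0: "C i *v X \<noteq> 0"
  shows "multideg_is m (LX_X m C X) (\<lambda>k. if k = i then 2 else 0) 0"
proof -
  define P where "P = C i *v X"
  have P0': "P \<noteq> 0" using P0 by (simp add: P_def)
  obtain a0 where a0: "ccross a0 P \<noteq> 0" using cross_ne[OF P0'] by blast
  have "ccross P a0 \<noteq> 0" using a0 ccross_anti[of P a0] by auto
  then have "dot (cvec (ccross P a0)) (ccross P a0) \<noteq> 0" by (rule dot_cvec)
  then have dP: "dot P (ccross a0 (cvec (ccross P a0))) \<noteq> 0" by (simp add: triple dot_comm)
  define d where "d = (\<lambda>k. if k = i then 2 else 0::nat)"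
  define q where "q = (\<lambda>A::nat \<Rightarrow> nat \<Rightarrow> complex^3. dot P (ccross (A i 0) (A i 1)))"
  have qp: "q \<in> polys (lin_coords m d)"
    unfolding q_def by (intro dot_polys pvec_ccross lin_pvec pvec_const) (use i in \<open>auto simp: d_def\<close>)
  have qn: "\<exists>A. q A \<noteq> 0"
    using dP by (intro exI[of _ "\<lambda>_ r. if r = 0 then a0 else cvec (ccross P a0)"]) (simp add: q_def)
  have main: "finite (section_pts m d A (LX_X m C X)) \<and> card (section_pts m d A (LX_X m C X)) = 0"
    if qA: "q A \<noteq> 0" for A
  proof -
    have "section_pts m d A (LX_X m C X) = {}"
    proof -
      have False if x: "x \<in> LX_X m C X" "dot (A i 0) (x i) = 0" "dot (A i 1) (x i) = 0" for x
      proof -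
        have "dot P (x i) = 0" using LX_g[OF x(1) i] by (simp add: P_def dot_comm)
        then have "x i = 0" using cramer3[OF x(2,3)] qA by (simp add: q_def)
        moreover have "x \<in> pts_m m" using x(1) zcl_pts by (simp add: LX_eq)
        ultimately show False using i by (simp add: pts_m_def)
      qed
      then show ?thesis unfolding section_pts_def d_def using i by (auto simp: dot_def less_2_cases_iff)
    qed
    then show ?thesis by simp
  qed
  show ?thesis unfolding multideg_is_def d_def[symmetric]
    using qp qn main by blast
qed



definition Wf :: "complex^4 \<Rightarrow> complex^4 \<Rightarrow> camera \<Rightarrow> camera \<Rightarrow> complex^4 \<Rightarrow> complex^4" where
  "Wf X g C1 C2 w = cross4 (ccross (C1 *v X) (C1 *v w) v* C1) (ccross (C2 *v X) (C2 *v w) v* C2) g"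

lemma witness_y:
  fixes C :: "nat \<Rightarrow> camera"
  assumes i: "i < m" and j: "j < m" and k: "k < m" and X0: "X \<noteq> 0" and gX0: "dot g X \<noteq> 0"
    and cam: "is_camera (C k)" and P: "\<forall>l<m. C l *v X \<noteq> 0"
    and W: "Wf X g (C i) (C j) wF \<noteq> 0"
  shows "\<exists>A B. ccross (C k *v X) (C k *v cross4 (ccross A (C i *v X) v* C i) (ccross B (C j *v X) v* C j) g) \<noteq> 0"
proof -
  define \<gamma> where "\<gamma> = g"
  have gX: "dot \<gamma> X \<noteq> 0" using gX0 by (simp add: \<gamma>_def)
  define Pk where "Pk = (\<lambda>l. C l *v X)"
  define t where "t = (\<lambda>l w. ccross (Pk l) (C l *v w))"
  define W' where "W' = (\<lambda>w. cross4 (t i w v* C i) (t j w v* C j) \<gamma>)"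
  have W'f: "W' wF \<noteq> 0" using W by (simp add: W'_def Wf_def t_def Pk_def \<gamma>_def)
  then obtain r' where r': "W' wF $ r' \<noteq> 0" by (auto simp: vec_eq_iff)
  have Pk0: "Pk k \<noteq> 0" using P k by (simp add: Pk_def)
  obtain a where a: "ccross a (Pk k) \<noteq> 0" using cross_ne[OF Pk0] by blast
  have a': "ccross (Pk k) a \<noteq> 0" using a ccross_anti[of "Pk k" a] by auto
  obtain w' where w': "C k *v w' = a" using cam unfolding is_camera_def by blast
  have tw': "t k w' \<noteq> 0" using a' w' by (simp add: t_def)
  then obtain s' where s': "t k w' $ s' \<noteq> 0" by (auto simp: vec_eq_iff)
  have F1: "(\<lambda>w. t k w $ s') \<in> polys wcoords"
    unfolding t_def by (intro pvec_nth pvec_ccross pvec_const pvec_mv pmat_const w_pvec)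
  have F2: "(\<lambda>w. W' w $ r') \<in> polys wcoords"
    unfolding W'_def t_def
    by (intro pvec_nth pvec_cross4 pvec_vm pvec_ccross pvec_const pvec_mv pmat_const w_pvec)
  obtain w1 where w1: "t k w1 $ s' * W' w1 $ r' \<noteq> 0"
    using polys_mult_ex[OF line_ok_w F1 F2 s' r'] by blast
  have tk1: "t k w1 \<noteq> 0" and W1: "W' w1 \<noteq> 0" using w1 by auto
  define Pi where "Pi = Pk i"
  define Pj where "Pj = Pk j"
  define ni where "ni = dot (cvec Pi) Pi"
  define nj where "nj = dot (cvec Pj) Pj"
  have ni: "ni \<noteq> 0" using dot_cvec P i by (metis ni_def Pi_def Pk_def)
  have nj: "nj \<noteq> 0" using dot_cvec P j by (metis nj_def Pj_def Pk_def)
  define As where "As = ccross (cvec Pi) (t i w1)"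
  define Bs where "Bs = ccross (cvec Pj) (t j w1)"
  have As: "ccross As Pi = ni *s t i w1"
    by (simp add: As_def cab_bac ni_def t_def Pi_def)
  have Bs: "ccross Bs Pj = nj *s t j w1"
    by (simp add: Bs_def cab_bac nj_def t_def Pj_def)
  define \<alpha> where "\<alpha> = ccross As Pi v* C i"
  define \<beta> where "\<beta> = ccross Bs Pj v* C j"
  define w0 where "w0 = cross4 \<alpha> \<beta> \<gamma>"
  have w0: "w0 = (ni * nj) *s W' w1"
    by (simp add: w0_def \<alpha>_def \<beta>_def As Bs vm_scale cross4_scale W'_def vector_smult_assoc)
  have w00: "w0 \<noteq> 0" using w0 ni nj W1 by (simp add: vec_eq_iff)
  define \<delta> where "\<delta> = cvec w0"
  define D where "D = dot \<delta> w0"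
  have D: "D \<noteq> 0" using dot_cvec[OF w00] by (simp add: D_def \<delta>_def)
  define v where "v = dot \<gamma> w1 *s X - dot \<gamma> X *s w1"
  define nv where "nv = dot \<delta> v *s w0 - D *s v"
  have CiX: "C i *v X = Pi" and CjX: "C j *v X = Pj" by (simp_all add: Pi_def Pj_def Pk_def)
  have aX: "dot \<alpha> X = 0" "dot \<alpha> w1 = 0"
    by (simp_all add: \<alpha>_def As vm_scale dot_vm t_def Pi_def[symmetric] CiX)
  have bX: "dot \<beta> X = 0" "dot \<beta> w1 = 0"
    by (simp_all add: \<beta>_def Bs vm_scale dot_vm t_def Pj_def[symmetric] CjX)
  have "dot \<alpha> nv = 0" using aX cross4_orth(1)[of \<alpha> \<beta> \<gamma>] by (simp add: nv_def v_def w0_def)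
  moreover have "dot \<beta> nv = 0" using bX cross4_orth(2)[of \<beta> \<alpha> \<gamma>] by (simp add: nv_def v_def w0_def)
  moreover have "dot \<gamma> nv = 0" using cross4_orth(3)[of \<gamma> \<alpha> \<beta>] by (simp add: nv_def v_def w0_def)
  moreover have "dot \<delta> nv = 0" by (simp add: nv_def D_def)
  moreover have "dot \<delta> (cross4 \<alpha> \<beta> \<gamma>) \<noteq> 0" using D by (simp add: D_def w0_def)
  ultimately have "nv = 0" by (rule cramer4_inj)
  then have e: "dot \<delta> v *s w0 = D *s v" by (simp add: nv_def)
  have "dot \<delta> v *s ccross (Pk k) (C k *v w0) = ccross (Pk k) (C k *v (dot \<delta> v *s w0))"
    by (simp add: mv_scale)
  also have "\<dots> = ccross (Pk k) (C k *v (D *s v))" by (simp add: e)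
  also have "\<dots> = (- (D * dot \<gamma> X)) *s t k w1"
    by (simp add: v_def mv_scale matrix_vector_mult_diff_distrib ccross_diff t_def Pk_def vector_smult_assoc)
  finally have "dot \<delta> v *s ccross (Pk k) (C k *v w0) \<noteq> 0" using D gX tk1 by (simp add: vec_eq_iff)
  then have "ccross (Pk k) (C k *v w0) \<noteq> 0" by auto
  then show ?thesis
    by (intro exI[of _ As] exI[of _ Bs]) (simp add: w0_def \<alpha>_def \<beta>_def Pk_def Pi_def Pj_def \<gamma>_def)
qed



lemma LX_h:
  fixes C :: "nat \<Rightarrow> camera"
  assumes x: "x \<in> LX_X m C X" and i: "i < m" and j: "j < m" and k: "k < m" and X0: "X \<noteq> 0" and gX0: "dot g X \<noteq> 0"
  shows "dot (x k v* C k) (cross4 (x i v* C i) (x j v* C j) g) = 0"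
proof (rule zcl_ev[OF x[unfolded LX_eq], of "\<lambda>l. ind i l + ind j l + ind k l"])
  show "multihom m (\<lambda>l. ind i l + ind j l + ind k l)
     (\<lambda>x. dot (x k v* C k) (cross4 (x i v* C i) (x j v* C j) g))"
    unfolding multihom_def
  proof (intro conjI allI impI)
    show "(\<lambda>x. dot (x k v* C k) (cross4 (x i v* C i) (x j v* C j) g)) \<in> polys (pt_coords m)"
      by (intro dot_polys pvec_vm pvec_cross4 pts_pvec pmat_const pvec_const i j k)
  next
    fix x :: "nat \<Rightarrow> complex^3" and l :: "nat \<Rightarrow> complex"
    show "dot ((l k *s x k) v* C k) (cross4 ((l i *s x i) v* C i) ((l j *s x j) v* C j) g) =
       (\<Prod>l2<m. l l2 ^ (ind i l2 + ind j l2 + ind k l2)) * dot (x k v* C k) (cross4 (x i v* C i) (x j v* C j) g)"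
      using prod_ind3[OF i j k, of l] by (simp add: vm_scale cross4_scale mult_ac)
  qed
next
  fix y assume "y \<in> LXS m C X"
  then obtain w where cw: "cindep X w" and y: "y = (\<lambda>i. if i < m then cam_line (C i) X w else 0)"
    unfolding LXS_def by auto
  define \<gamma> where "\<gamma> = g"
  have gX: "dot \<gamma> X \<noteq> 0" using gX0 by (simp add: \<gamma>_def)
  define nv where "nv = dot \<gamma> w *s X + (- dot \<gamma> X) *s w"
  have nv0: "nv \<noteq> 0"
  proof
    assume "nv = 0"
    then have "dot \<gamma> w = 0 \<and> - dot \<gamma> X = 0" using cw unfolding cindep_def nv_def by blast
    then show False using gX by simp
  qed
  have o: "dot (y l v* C l) nv = 0" if "l < m" for l
    using that by (simp add: y dot_vm cam_line_def nv_def matrix_vector_right_distrib mv_scale)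
  have "dot \<gamma> nv = 0" by (simp add: nv_def)
  then show "dot (y k v* C k) (cross4 (y i v* C i) (y j v* C j) g) = 0"
    using cramer4_zero[OF o[OF i] o[OF j] _ o[OF k] nv0] by (simp add: \<gamma>_def)
qed

lemma part2b:
  fixes C :: "nat \<Rightarrow> camera"
  assumes i: "i < m" and j: "j < m" and ij: "i \<noteq> j" and X0: "X \<noteq> 0" and gX0: "dot g X \<noteq> 0"
    and cams: "\<forall>k<m. is_camera (C k)" and P: "\<forall>l<m. C l *v X \<noteq> 0"
    and W: "Wf X g (C i) (C j) wF \<noteq> 0"
  shows "multideg_is m (LX_X m C X) (\<lambda>k. if k = i \<or> k = j then 1 else 0) 1"
proof -
  define \<gamma> where "\<gamma> = g"
  define Pk where "Pk = (\<lambda>l. C l *v X)"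
  define w0f where "w0f = (\<lambda>A B. cross4 (ccross A (Pk i) v* C i) (ccross B (Pk j) v* C j) \<gamma>)"
  define yk where "yk = (\<lambda>k A B. ccross (Pk k) (C k *v w0f A B))"
  have ex: "\<exists>s A B. yk k A B $ s \<noteq> 0" if k: "k < m" for k
  proof -
    obtain A B where "yk k A B \<noteq> 0"
      using witness_y[OF i j k X0 gX0 _ P W] cams k by (auto simp: yk_def w0f_def Pk_def \<gamma>_def)
    then show ?thesis by (auto simp: vec_eq_iff)
  qed
  define sk where "sk = (\<lambda>k. SOME s. \<exists>A B. yk k A B $ s \<noteq> 0)"
  have sk: "\<exists>A B. yk k A B $ sk k \<noteq> 0" if "k < m" for k
    unfolding sk_def using someI_ex[OF ex[OF that]] .
  have Pi0: "Pk i \<noteq> 0" and Pj0: "Pk j \<noteq> 0" using P i j by (auto simp: Pk_def)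
  obtain a1 where a1: "ccross a1 (Pk i) \<noteq> 0" using cross_ne[OF Pi0] by blast
  then obtain s1 where s1: "ccross a1 (Pk i) $ s1 \<noteq> 0" by (auto simp: vec_eq_iff)
  obtain b1 where b1: "ccross b1 (Pk j) \<noteq> 0" using cross_ne[OF Pj0] by blast
  then obtain s2 where s2: "ccross b1 (Pk j) $ s2 \<noteq> 0" by (auto simp: vec_eq_iff)
  define d where "d = (\<lambda>k. if k = i \<or> k = j then 1 else 0::nat)"
  define G where "G = (\<lambda>k (Aa::nat \<Rightarrow> nat \<Rightarrow> complex^3).
     if k < m then yk k (Aa i 0) (Aa j 0) $ sk k
     else if k = m then ccross (Aa i 0) (Pk i) $ s1 else ccross (Aa j 0) (Pk j) $ s2)"
  define q where "q = (\<lambda>Aa. \<Prod>k<m+2. G k Aa)"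
  have li: "pvec (lin_coords m d) (\<lambda>A. A i 0)" "pvec (lin_coords m d) (\<lambda>A. A j 0)"
    using i j by (auto intro!: lin_pvec simp: d_def)
  have Gk: "G k \<in> polys (lin_coords m d) \<and> (\<exists>Aa. G k Aa \<noteq> 0)" if "k \<in> {..<m+2}" for k
  proof (cases "k < m")
    case True
    have "G k = (\<lambda>Aa. yk k (Aa i 0) (Aa j 0) $ sk k)" using True by (simp add: G_def)
    moreover have "(\<lambda>Aa. yk k (Aa i 0) (Aa j 0) $ sk k) \<in> polys (lin_coords m d)"
      unfolding yk_def w0f_def
      by (intro pvec_nth pvec_ccross pvec_const pvec_mv pmat_const pvec_cross4 pvec_vm li)
    moreover obtain A B where "yk k A B $ sk k \<noteq> 0" using sk[OF True] by blast
    then have "\<exists>Aa. yk k (Aa i 0) (Aa j 0) $ sk k \<noteq> 0" using ij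
      by (intro exI[of _ "\<lambda>i' r. if i' = i then A else B"]) simp
    ultimately show ?thesis by simp
  next
    case False
    show ?thesis
    proof (cases "k = m")
      case True
      have "G k = (\<lambda>Aa. ccross (Aa i 0) (Pk i) $ s1)" using True by (simp add: G_def)
      moreover have "(\<lambda>Aa. ccross (Aa i 0) (Pk i) $ s1) \<in> polys (lin_coords m d)"
        by (intro pvec_nth pvec_ccross pvec_const li)
      moreover have "\<exists>Aa. ccross (Aa i 0) (Pk i) $ s1 \<noteq> 0"
        using s1 by (intro exI[of _ "\<lambda>_ _. a1"]) simp
      ultimately show ?thesis by simp
    next
      case False2: False
      have "G k = (\<lambda>Aa. ccross (Aa j 0) (Pk j) $ s2)" using False False2 by (simp add: G_def)
      moreover have "(\<lambda>Aa. ccross (Aa j 0) (Pk j) $ s2) \<in> polys (lin_coords m d)"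
        by (intro pvec_nth pvec_ccross pvec_const li)
      moreover have "\<exists>Aa. ccross (Aa j 0) (Pk j) $ s2 \<noteq> 0"
        using s2 by (intro exI[of _ "\<lambda>_ _. b1"]) simp
      ultimately show ?thesis by simp
    qed
  qed
  have qq: "q \<in> polys (lin_coords m d) \<and> (\<exists>Aa. q Aa \<noteq> 0)"
    unfolding q_def by (rule polys_prod_ex[OF line_ok_lin finite_lessThan Gk])
  have main: "finite (section_pts m d Aa (LX_X m C X)) \<and> card (section_pts m d Aa (LX_X m C X)) = 1"
    if qA: "q Aa \<noteq> 0" for Aa
  proof -
    define A where "A = Aa i 0"
    define B where "B = Aa j 0"
    have Gn: "G k Aa \<noteq> 0" if "k < m + 2" for k
      using qA that unfolding q_def by (metis finite_lessThan lessThan_iff prod_zero_iff)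
    have yn: "yk k A B \<noteq> 0" if "k < m" for k
      using Gn[of k] that by (auto simp: G_def A_def B_def)
    have An: "ccross A (Pk i) \<noteq> 0" using Gn[of m] by (auto simp: G_def A_def)
    have Bn: "ccross B (Pk j) \<noteq> 0" using Gn[of "m+1"] by (auto simp: G_def B_def)
    define w0 where "w0 = w0f A B"
    have ykw: "yk k A B = cam_line (C k) X w0" for k
      by (simp add: yk_def cam_line_def w0_def Pk_def)
    define y where "y = (\<lambda>k. if k < m then cam_line (C k) X w0 else 0)"
    have cw: "cindep X w0"
      unfolding cindep_def
    proof (intro allI impI)
      fix a b assume h: "a *s X + b *s w0 = 0"
      have "b = 0"
      proof (rule ccontr)
        assume b: "b \<noteq> 0"
        have "w0 = (- a / b) *s X" using h b
          by (simp add: vec_eq_iff field_simps) (metis add.commute add_eq_0_iff mult.commute)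
        then have "cam_line (C i) X w0 = (- a / b) *s ccross (C i *v X) (C i *v X)"
          by (simp only: cam_line_def mv_scale ccross_scale(2))
        then have "cam_line (C i) X w0 = 0" by simp
        then show False using yn[OF i] ykw by simp
      qed
      then show "a = 0 \<and> b = 0" using h X0 by (simp add: vec_eq_iff) (metis vec_eq_iff zero_index)
    qed
    have yS: "y \<in> LXS m C X"
      unfolding LXS_def y_def using cw yn ykw by auto
    have yV: "y \<in> LX_X m C X" unfolding LX_eq by (rule zcl_sub[OF LXS_pts yS])
    have yA: "dot A (y i) = 0"
    proof -
      have "dot A (y i) = dot (ccross A (Pk i) v* C i) w0"
        using i by (simp add: y_def cam_line_def triple dot_vm Pk_def)
      then show ?thesis using cross4_orth(1) by (simp add: w0_def w0f_def)
    qed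
    have yB: "dot B (y j) = 0"
    proof -
      have "dot B (y j) = dot (ccross B (Pk j) v* C j) w0"
        using j by (simp add: y_def cam_line_def triple dot_vm Pk_def)
      then show ?thesis using cross4_orth(2) by (simp add: w0_def w0f_def)
    qed
    have uniq: "\<forall>k<m. \<exists>c. x k = c *s y k"
      if xV: "x \<in> LX_X m C X" and xA: "dot A (x i) = 0" and xB: "dot B (x j) = 0" for x
    proof (intro allI impI)
      fix k assume k: "k < m"
      have xp: "x \<in> pts_m m" using xV zcl_pts by (simp add: LX_eq)
      have gi: "dot (x i) (Pk i) = 0" using LX_g[OF xV i] by (simp add: Pk_def)
      have gj: "dot (x j) (Pk j) = 0" using LX_g[OF xV j] by (simp add: Pk_def)
      have gk: "dot (x k) (Pk k) = 0" using LX_g[OF xV k] by (simp add: Pk_def)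
      obtain si where si: "x i = si *s ccross A (Pk i)"
        using perp2[OF _ gi An] xA by (auto simp: dot_comm)
      obtain sj where sj: "x j = sj *s ccross B (Pk j)"
        using perp2[OF _ gj Bn] xB by (auto simp: dot_comm)
      have "si \<noteq> 0" using xp i si by (auto simp: pts_m_def)
      moreover have "sj \<noteq> 0" using xp j sj by (auto simp: pts_m_def)
      moreover have "(si * sj) * dot (x k) (C k *v w0) = 0"
        using LX_h[OF xV i j k X0 gX0] by (simp add: si sj vm_scale cross4_scale dot_vm w0_def w0f_def Pk_def \<gamma>_def) blast
      ultimately have "dot (x k) (C k *v w0) = 0" by simp
      then have "\<exists>c. x k = c *s ccross (Pk k) (C k *v w0)" using perp2[OF gk] yn[OF k]
        by (simp add: yk_def w0_def)
      then show "\<exists>c. x k = c *s y k" using k by (simp add: y_def cam_line_def Pk_def)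
    qed
    have sp: "section_pts m d Aa (LX_X m C X) =
        (\<lambda>x. \<lambda>i. pt (x i)) ` {x \<in> LX_X m C X. dot A (x i) = 0 \<and> dot B (x j) = 0}"
      unfolding section_pts_def d_def A_def B_def
      by (rule arg_cong[where f = "image _"], rule Collect_cong) (simp only: cond11[OF i j])
    show ?thesis unfolding sp
      by (rule section_single[where y = y])
        (use zcl_pts yV yA yB uniq LX_eq in \<open>auto\<close>)
  qed
  show ?thesis unfolding multideg_is_def d_def[symmetric]
    using qq main by blast
qed



definition mkC :: "4 \<Rightarrow> 4 \<Rightarrow> 4 \<Rightarrow> camera" where
  "mkC r1 r2 r3 = (\<chi> r c. if r = 1 then (if c = r1 then 1 else 0) else if r = 2 then (if c = r2 then 1 else 0)
      else (if c = r3 then 1 else 0))"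

lemma sum_ind: "(\<Sum>c\<in>UNIV. (if c = r then 1 else 0) * (x::complex^'n) $ c) = x $ r"
proof -
  have "(\<Sum>c\<in>UNIV. (if c = r then 1 else 0) * x $ c) = (\<Sum>c\<in>UNIV. if c = r then x $ c else 0)"
    by (rule sum.cong) auto
  then show ?thesis by simp
qed

lemma mkC_mv[simp]: "(mkC r1 r2 r3 *v x) $ 1 = x $ r1" "(mkC r1 r2 r3 *v x) $ 2 = x $ r2" "(mkC r1 r2 r3 *v x) $ 3 = x $ r3"
  by (simp_all add: mkC_def matrix_vector_mult_def sum_ind)

lemma mkC_vm[simp]: "(t v* mkC r1 r2 r3) $ c = (if c = r1 then t$1 else 0) + (if c = r2 then t$2 else 0) + (if c = r3 then t$3 else 0)"
  by (simp add: mkC_def vector_matrix_mult_def sum_3)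

lemma wit1: "X$1 \<noteq> 0 \<Longrightarrow> Wf X (axis 1 1) (mkC 1 2 4) (mkC 1 2 3) (axis 2 1) $ 2 \<noteq> 0"
  by (simp add: Wf_def cross4_def det3_def axis_def)

lemma wit2: "X$2 \<noteq> 0 \<Longrightarrow> Wf X (axis 2 1) (mkC 2 3 1) (mkC 2 3 4) (axis 3 1) $ 3 \<noteq> 0"
  by (simp add: Wf_def cross4_def det3_def axis_def)
lemma wit3: "X$3 \<noteq> 0 \<Longrightarrow> Wf X (axis 3 1) (mkC 3 4 2) (mkC 3 4 1) (axis 4 1) $ 4 \<noteq> 0"
  by (simp add: Wf_def cross4_def det3_def axis_def)
lemma wit4: "X$4 \<noteq> 0 \<Longrightarrow> Wf X (axis 4 1) (mkC 4 1 3) (mkC 4 1 2) (axis 1 1) $ 1 \<noteq> 0"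
  by (simp add: Wf_def cross4_def det3_def axis_def)

lemma dot_axis: "dot (axis a 1) X = X $ a"
  unfolding dot_def axis_def by (simp add: sum_ind)

lemma wit_all:
  assumes "(X::complex^4) \<noteq> 0"
  shows "\<exists>g wF C1 C2. dot g X \<noteq> 0 \<and> Wf X g C1 C2 wF \<noteq> 0"
proof -
  obtain a where a: "X $ a \<noteq> 0" using assms by (auto simp: vec_eq_iff)
  consider "a = 1" | "a = 2" | "a = 3" | "a = 4" using exhaust_4 by blast
  then show ?thesis
  proof cases
    case 1 then show ?thesis using a wit1[of X] dot_axis[of 1 X] by (metis zero_index)
  next
    case 2 then show ?thesis using a wit2[of X] dot_axis[of 2 X] by (metis zero_index)
  next
    case 3 then show ?thesis using a wit3[of X] dot_axis[of 3 X] by (metis zero_index)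
  next
    case 4 then show ?thesis using a wit4[of X] dot_axis[of 4 X] by (metis zero_index)
  qed
qed

lemma minor_ex:
  assumes c: "cindep u (v::complex^4)"
  shows "\<exists>a b. u$a * v$b - u$b * v$a \<noteq> 0"
proof (rule ccontr)
  assume "\<not> ?thesis"
  then have h: "u$a * v$b = u$b * v$a" for a b by auto
  have "u \<noteq> 0"
  proof
    assume "u = 0"
    then have "1 *s u + 0 *s v = 0" by simp
    then have "(1::complex) = 0" using c unfolding cindep_def by blast
    then show False by simp
  qed
  then obtain a where a: "u $ a \<noteq> 0" by (auto simp: vec_eq_iff)
  have "v$a *s u + (- u$a) *s v = 0"
    unfolding vec_eq_iff using h by (auto simp: algebra_simps)
  then have "- u$a = 0" using c unfolding cindep_def by blast
  then show False using a by simp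
qed

lemma prod_nz: "finite K \<Longrightarrow> (\<Prod>k\<in>K. (f k :: complex)) \<noteq> 0 \<Longrightarrow> k \<in> K \<Longrightarrow> f k \<noteq> 0"
  by (metis prod_zero_iff)



theorem proposition1p6:
  fixes m :: nat and X u v :: "complex^4"
  assumes "m \<ge> 2" and "X \<noteq> 0" and "cindep u v"
  shows "\<exists>p \<in> polys (cam_coords m). (\<exists>Cs. p Cs \<noteq> 0) \<and>
     (\<forall>Cs. camera_arrangement m Cs \<and> p Cs \<noteq> 0 \<longrightarrow>
        (\<forall>i<m. multideg_is m (multiview_line m Cs u v) (\<lambda>k. if k = i then 1 else 0) 1) \<and>
        (\<forall>i<m. multideg_is m (LX_X m Cs X) (\<lambda>k. if k = i then 2 else 0) 0) \<and>
        (\<forall>i<m. \<forall>j<m. i \<noteq> j \<longrightarrow>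
           multideg_is m (LX_X m Cs X) (\<lambda>k. if k = i \<or> k = j then 1 else 0) 1))"
proof -
  have X0: "X \<noteq> 0" using assms(2) .
  obtain g wF C1 C2 where gX: "dot g X \<noteq> 0" and W0: "Wf X g C1 C2 wF \<noteq> 0"
    using wit_all[OF X0] by blast
  obtain r0 where r0: "Wf X g C1 C2 wF $ r0 \<noteq> 0" using W0 by (auto simp: vec_eq_iff)
  obtain a b where ab: "u$a * v$b - u$b * v$a \<noteq> 0" using minor_ex[OF assms(3)] by blast
  obtain a' where a': "X$a' \<noteq> 0" using X0 by (auto simp: vec_eq_iff)
  define FA where "FA = (\<lambda>k (Cs::nat \<Rightarrow> camera). ccross (Cs k *v u) (Cs k *v v) $ 3)"
  define FB where "FB = (\<lambda>k (Cs::nat \<Rightarrow> camera). (Cs k *v X) $ 1)"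
  define FC where "FC = (\<lambda>ij (Cs::nat \<Rightarrow> camera). Wf X g (Cs (fst ij)) (Cs (snd ij)) wF $ r0)"
  define Pairs where "Pairs = {ij::nat \<times> nat. fst ij < m \<and> snd ij < m \<and> fst ij \<noteq> snd ij}"
  have finP: "finite Pairs"
    by (rule finite_subset[of _ "{..<m} \<times> {..<m}"]) (auto simp: Pairs_def)
  have hA: "(\<lambda>Cs. \<Prod>k\<in>{..<m}. FA k Cs) \<in> polys (cam_coords m) \<and> (\<exists>Cs. (\<Prod>k\<in>{..<m}. FA k Cs) \<noteq> 0)"
  proof (rule polys_prod_ex[OF line_ok_cam finite_lessThan])
    fix k assume k: "k \<in> {..<m}"
    show "FA k \<in> polys (cam_coords m) \<and> (\<exists>x. FA k x \<noteq> 0)"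
    proof
      show "FA k \<in> polys (cam_coords m)" unfolding FA_def
        by (intro pvec_nth pvec_ccross pvec_mv cam_pmat pvec_const) (use k in simp)+
      show "\<exists>x. FA k x \<noteq> 0" using ab
        by (intro exI[of _ "\<lambda>_. mkC a b a"]) (simp add: FA_def)
    qed
  qed
  have hB: "(\<lambda>Cs. \<Prod>k\<in>{..<m}. FB k Cs) \<in> polys (cam_coords m) \<and> (\<exists>Cs. (\<Prod>k\<in>{..<m}. FB k Cs) \<noteq> 0)"
  proof (rule polys_prod_ex[OF line_ok_cam finite_lessThan])
    fix k assume k: "k \<in> {..<m}"
    show "FB k \<in> polys (cam_coords m) \<and> (\<exists>x. FB k x \<noteq> 0)"
    proof
      show "FB k \<in> polys (cam_coords m)" unfolding FB_def
        by (intro pvec_nth pvec_mv cam_pmat pvec_const) (use k in simp)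
      show "\<exists>x. FB k x \<noteq> 0" using a'
        by (intro exI[of _ "\<lambda>_. mkC a' a' a'"]) (simp add: FB_def)
    qed
  qed
  have hC: "(\<lambda>Cs. \<Prod>k\<in>Pairs. FC k Cs) \<in> polys (cam_coords m) \<and> (\<exists>Cs. (\<Prod>k\<in>Pairs. FC k Cs) \<noteq> 0)"
  proof (rule polys_prod_ex[OF line_ok_cam finP])
    fix ij assume ij: "ij \<in> Pairs"
    show "FC ij \<in> polys (cam_coords m) \<and> (\<exists>x. FC ij x \<noteq> 0)"
    proof
      show "FC ij \<in> polys (cam_coords m)" unfolding FC_def Wf_def
        by (intro pvec_nth pvec_cross4 pvec_vm pvec_ccross pvec_mv cam_pmat pvec_const)
          (use ij in \<open>simp_all add: Pairs_def\<close>)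
      show "\<exists>x. FC ij x \<noteq> 0" using r0 ij
        by (intro exI[of _ "\<lambda>l. if l = fst ij then C1 else C2"]) (simp add: FC_def Pairs_def)
    qed
  qed
  define p where "p = (\<lambda>Cs. ((\<Prod>k\<in>{..<m}. FA k Cs) * (\<Prod>k\<in>{..<m}. FB k Cs)) * (\<Prod>k\<in>Pairs. FC k Cs))"
  have pAB: "(\<lambda>Cs. (\<Prod>k\<in>{..<m}. FA k Cs) * (\<Prod>k\<in>{..<m}. FB k Cs)) \<in> polys (cam_coords m)"
    using polys.mult[of "\<lambda>Cs. \<Prod>k\<in>{..<m}. FA k Cs" "cam_coords m" "\<lambda>Cs. \<Prod>k\<in>{..<m}. FB k Cs"] hA hB
    by simp
  have pp: "p \<in> polys (cam_coords m)"
    unfolding p_def using polys.mult[OF pAB, of "\<lambda>Cs. \<Prod>k\<in>Pairs. FC k Cs"] hC by simp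
  obtain c1 where c1: "(\<Prod>k\<in>{..<m}. FA k c1) \<noteq> 0" using hA by blast
  obtain c2 where c2: "(\<Prod>k\<in>{..<m}. FB k c2) \<noteq> 0" using hB by blast
  obtain c3 where c3: "(\<Prod>k\<in>Pairs. FC k c3) \<noteq> 0" using hC by blast
  have e12: "\<exists>x. (\<Prod>k\<in>{..<m}. FA k x) * (\<Prod>k\<in>{..<m}. FB k x) \<noteq> 0"
    by (rule polys_mult_ex[where f="\<lambda>Cs. \<Prod>k\<in>{..<m}. FA k Cs" and g="\<lambda>Cs. \<Prod>k\<in>{..<m}. FB k Cs",
          OF line_ok_cam conjunct1[OF hA] conjunct1[OF hB] c1 c2])
  then obtain c12 where c12: "(\<Prod>k\<in>{..<m}. FA k c12) * (\<Prod>k\<in>{..<m}. FB k c12) \<noteq> 0" by blast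
  have "\<exists>x. ((\<Prod>k\<in>{..<m}. FA k x) * (\<Prod>k\<in>{..<m}. FB k x)) * (\<Prod>k\<in>Pairs. FC k x) \<noteq> 0"
    by (rule polys_mult_ex[where f="\<lambda>Cs. (\<Prod>k\<in>{..<m}. FA k Cs) * (\<Prod>k\<in>{..<m}. FB k Cs)"
          and g="\<lambda>Cs. \<Prod>k\<in>Pairs. FC k Cs", OF line_ok_cam pAB conjunct1[OF hC] c12 c3])
  then obtain c123 where "p c123 \<noteq> 0" unfolding p_def by blast
  then have pn: "\<exists>Cs. p Cs \<noteq> 0" by blast
  have main: "(\<forall>i<m. multideg_is m (multiview_line m Cs u v) (\<lambda>k. if k = i then 1 else 0) 1) \<and>
        (\<forall>i<m. multideg_is m (LX_X m Cs X) (\<lambda>k. if k = i then 2 else 0) 0) \<and>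
        (\<forall>i<m. \<forall>j<m. i \<noteq> j \<longrightarrow>
           multideg_is m (LX_X m Cs X) (\<lambda>k. if k = i \<or> k = j then 1 else 0) 1)"
    if ca: "camera_arrangement m Cs" and pC: "p Cs \<noteq> 0" for Cs
  proof -
    have pA: "(\<Prod>k\<in>{..<m}. FA k Cs) \<noteq> 0" and pB: "(\<Prod>k\<in>{..<m}. FB k Cs) \<noteq> 0"
      and pCC: "(\<Prod>k\<in>Pairs. FC k Cs) \<noteq> 0" using pC by (auto simp: p_def)
    have nk: "\<forall>k<m. ccross (Cs k *v u) (Cs k *v v) \<noteq> 0"
    proof (intro allI impI)
      fix k assume "k < m"
      then have "FA k Cs \<noteq> 0" using prod_nz[OF finite_lessThan pA] by simp
      then show "ccross (Cs k *v u) (Cs k *v v) \<noteq> 0" unfolding FA_def by (metis zero_index)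
    qed
    have P: "\<forall>k<m. Cs k *v X \<noteq> 0"
    proof (intro allI impI)
      fix k assume "k < m"
      then have "FB k Cs \<noteq> 0" using prod_nz[OF finite_lessThan pB] by simp
      then show "Cs k *v X \<noteq> 0" unfolding FB_def by (metis zero_index)
    qed
    have W: "Wf X g (Cs i) (Cs j) wF \<noteq> 0" if "i < m" "j < m" "i \<noteq> j" for i j
    proof -
      have "(i, j) \<in> Pairs" using that by (simp add: Pairs_def)
      then have "FC (i, j) Cs \<noteq> 0" using prod_nz[OF finP pCC] by blast
      then show ?thesis unfolding FC_def by (metis zero_index fst_conv snd_conv)
    qed
    have cams: "\<forall>k<m. is_camera (Cs k)" using ca by (simp add: camera_arrangement_def)
    show ?thesis
    proof (intro conjI allI impI)
      fix i assume i: "i < m"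
      show "multideg_is m (multiview_line m Cs u v) (\<lambda>k. if k = i then 1 else 0) 1"
        by (rule part1[OF i nk])
      show "multideg_is m (LX_X m Cs X) (\<lambda>k. if k = i then 2 else 0) 0"
        using part2a[OF i] P i by blast
    next
      fix i j assume i: "i < m" and j: "j < m" and ij: "i \<noteq> j"
      show "multideg_is m (LX_X m Cs X) (\<lambda>k. if k = i \<or> k = j then 1 else 0) 1"
        by (rule part2b[OF i j ij X0 gX cams P W[OF i j ij]])
    qed
  qed
  show ?thesis using pp pn main by blast
qed

end
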